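(* Assume AS.1 and AS.3, let $\omega\in(0,1)$ and consider a realization of the SKOFFAR$p$ algorithm. Let $$k_*=\left\lceil\frac{2L_p\,\epsilon^{-(p+1)/p}}{\vartheta\nu_0\,\omega^{(p+1)/p}}\right\rceil,$$ and let $k_0<N_1(\epsilon)$ be an iteration index such that at least $k_*$ of the iterations with indices $0,\dots,k_0-1$ are $\omega$-true. Then $k_1$ is finite, $k_1\le k_0$, and $\sigma_k\ge 2L_p$ for all $k\ge k_1$.
   Context: Let $f:\mathbb{R}^n\to\mathbb{R}$ and $p\ge1$ an integer; $\|\cdot\|$ is the Euclidean norm for vectors, the spectral norm for matrices and the induced (subordinate) norm for tensors; $T[d]^i$ denotes a symmetric $i$-tensor applied to $i$ copies of $d$. Assumptions: AS.1: $f$ is $p$ times continuously differentiable on $\mathbb{R}^n$. AS.3: there is $L_p\ge 0$ with $\|\nabla^p f(x)-\nabla^p f(y)\|\le L_p\|x-y\|$ for all $x,y$. For $x,s\in\mathbb{R}^n$ let $T_{f,p}(x,s)=f(x)+\sum_{i=1}^p\frac{1}{i!}\nabla^i f(x)[s]^i$. Write $g_k=\nabla f(x_k)$. The SKOFFAR$p$ algorithm: given $x_0\in\mathbb{R}^n$, $\nu_0>0$, $\epsilon\in(0,1]$, $\theta>1$, $\mu_{-1}\ge 0$, $\vartheta\in(0,1)$ and a fixed distribution $\mathcal S$ of $\ell\times n$ random matrices ($\ell<n$), for $k=0,1,2,\dots$: (i) if $k=0$ set $\sigma_0=\nu_0$; otherwise choose $\sigma_k\in[\vartheta\nu_k,\max(\nu_k,\mu_k)]$,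 where $\mu_k=\max\Big[\mu_{k-1},\frac{\|S_{k-1}g_k\|-\|\nabla_{\hat s}\widehat T_{k-1}(\hat s_{k-1})\|}{\kappa_{S,k-1}\|s_{k-1}\|^p}\Big]$ for some number $\kappa_{S,k-1}\ge\|S_{k-1}\|$; (ii) draw $S_k\in\mathbb{R}^{\ell\times n}$ from $\mathcal S$, define for $\hat s\in\mathbb{R}^\ell$ the sketched Taylor model $\widehat T_k(\hat s)=T_{f,p}(x_k,S_k^T\hat s)$ and the sketched model $\widehat m_k(\hat s)=\widehat T_k(\hat s)+\frac{\sigma_k}{(p+1)!}\|S_k^T\hat s\|^{p+1}$, and compute $\hat s_k\in\mathbb{R}^\ell$ with $\widehat m_k(\hat s_k)<\widehat m_k(0)$ and $\|\nabla_{\hat s}\widehat T_k(\hat s_k)\|\le\theta\frac{\sigma_k}{p!}\|S_k^T\hat s_k\|^{p-1}\|S_kS_k^T\hat s_k\|$; set $s_k=S_k^T\hat s_k$; (iii) set $x_{k+1}=x_k+s_k$ and $\nu_{k+1}=\nu_k+\nu_k\|s_k\|^{p+1}$. $N_1(\epsilon)=\min\{k\in\mathbb N:\|g_k\|\le\epsilon\}$ (possibly $+\infty$). Define $k_1=\inf\{k\ge1:\nu_k\ge 2L_p/\vartheta\}$. For $\omega\in(0,1)$, an iteration $k\in\{0,\dots,N_1(\epsilon)-2\}$ is called $\omega$-true if $\|s_k\|^p\ge\omega\epsilon$. *)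

theory Defs
  imports "HOL-Analysis.Analysis" "HOL-Library.Extended_Nat"
begin

text \<open>Iterated (Frechet) derivatives: hderiv f i x [h_i,...,h_1] is the i-th derivative
  tensor of f at x applied to the directions h_1..h_i.\<close>
fun hderiv :: "('a::real_normed_vector \<Rightarrow> real) \<Rightarrow> nat \<Rightarrow> 'a \<Rightarrow> 'a list \<Rightarrow> real" where
  "hderiv f 0 x vs = f x"
| "hderiv f (Suc i) x vs =
     (case vs of [] \<Rightarrow> 0 | h # ws \<Rightarrow> frechet_derivative (\<lambda>y. hderiv f i y ws) (at x) h)"

definition AS1 :: "('a::real_normed_vector \<Rightarrow> real) \<Rightarrow> nat \<Rightarrow> bool" where
  "AS1 f p \<longleftrightarrow>
     (\<forall>i<p. \<forall>ws. length ws = i \<longrightarrow> (\<forall>x. (\<lambda>y. hderiv f i y ws) differentiable (at x)))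
   \<and> (\<forall>ws. length ws = p \<longrightarrow> continuous_on UNIV (\<lambda>y. hderiv f p y ws))"

text \<open>AS.3: the p-th derivative tensor is L-Lipschitz in the induced tensor norm
  (the induced norm of a p-tensor T is the sup of |T[v_1,...,v_p]| over unit vectors).\<close>
definition AS3 :: "('a::real_normed_vector \<Rightarrow> real) \<Rightarrow> nat \<Rightarrow> real \<Rightarrow> bool" where
  "AS3 f p L \<longleftrightarrow> L \<ge> 0 \<and>
     (\<forall>x y vs. length vs = p \<longrightarrow> (\<forall>v\<in>set vs. norm v = 1) \<longrightarrow>
        \<bar>hderiv f p x vs - hderiv f p y vs\<bar> \<le> L * norm (x - y))"

definition grad :: "('a::real_inner \<Rightarrow> real) \<Rightarrow> 'a \<Rightarrow> 'a" where
  "grad \<phi> z = (SOME G. (\<phi> has_derivative (\<lambda>h. inner G h)) (at z))"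

definition taylor :: "('a::real_normed_vector \<Rightarrow> real) \<Rightarrow> nat \<Rightarrow> 'a \<Rightarrow> 'a \<Rightarrow> real" where
  "taylor f p x s = f x + (\<Sum>i=1..p. (1 / fact i) * hderiv f i x (replicate i s))"

definition sk_taylor :: "(real^'n \<Rightarrow> real) \<Rightarrow> nat \<Rightarrow> real^'n \<Rightarrow> real^'n^'l \<Rightarrow> real^'l \<Rightarrow> real" where
  "sk_taylor f p x S sh = taylor f p x (transpose S *v sh)"

definition sk_model :: "(real^'n \<Rightarrow> real) \<Rightarrow> nat \<Rightarrow> real^'n \<Rightarrow> real^'n^'l \<Rightarrow> real \<Rightarrow> real^'l \<Rightarrow> real" where
  "sk_model f p x S \<sigma> sh =
     sk_taylor f p x S sh + \<sigma> / fact (p + 1) * norm (transpose S *v sh) ^ (p + 1)"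

text \<open>A realization of SKOFFARp: iterates x, sketching matrices S, sketched steps sh,
  regularisation parameters sigma, nu, mu (mu 0 is mu_{-1}; mu k is mu_k for k >= 1), kappa.\<close>
definition skoffar_run ::
  "(real^'n \<Rightarrow> real) \<Rightarrow> nat \<Rightarrow> real^'n \<Rightarrow> real \<Rightarrow> real \<Rightarrow> real \<Rightarrow> real \<Rightarrow> real
   \<Rightarrow> (nat \<Rightarrow> real^'n) \<Rightarrow> (nat \<Rightarrow> real^'n^'l) \<Rightarrow> (nat \<Rightarrow> real^'l)
   \<Rightarrow> (nat \<Rightarrow> real) \<Rightarrow> (nat \<Rightarrow> real) \<Rightarrow> (nat \<Rightarrow> real) \<Rightarrow> (nat \<Rightarrow> real) \<Rightarrow> bool" where
  "skoffar_run f p x0 \<nu>0 \<epsilon> \<theta> \<mu>m1 vth x S sh \<sigma> \<nu> \<mu> \<kappa> \<longleftrightarrow>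
     0 < \<nu>0 \<and> 0 < \<epsilon> \<and> \<epsilon> \<le> 1 \<and> 1 < \<theta> \<and> 0 \<le> \<mu>m1 \<and> 0 < vth \<and> vth < 1
   \<and> x 0 = x0 \<and> \<nu> 0 = \<nu>0 \<and> \<sigma> 0 = \<nu>0 \<and> \<mu> 0 = \<mu>m1
   \<and> (\<forall>k. \<kappa> k \<ge> onorm (\<lambda>v. S k *v v))
   \<and> (\<forall>k\<ge>1. \<mu> k = max (\<mu> (k - 1))
          ((norm (S (k - 1) *v grad f (x k))
            - norm (grad (sk_taylor f p (x (k - 1)) (S (k - 1))) (sh (k - 1))))
           / (\<kappa> (k - 1) * norm (transpose (S (k - 1)) *v sh (k - 1)) ^ p)))
   \<and> (\<forall>k\<ge>1. vth * \<nu> k \<le> \<sigma> k \<and> \<sigma> k \<le> max (\<nu> k) (\<mu> k))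
   \<and> (\<forall>k. sk_model f p (x k) (S k) (\<sigma> k) (sh k) < sk_model f p (x k) (S k) (\<sigma> k) 0)
   \<and> (\<forall>k. norm (grad (sk_taylor f p (x k) (S k)) (sh k))
          \<le> \<theta> * (\<sigma> k / fact p) * norm (transpose (S k) *v sh k) ^ (p - 1)
              * norm (S k *v (transpose (S k) *v sh k)))
   \<and> (\<forall>k. x (Suc k) = x k + transpose (S k) *v sh k)
   \<and> (\<forall>k. \<nu> (Suc k) = \<nu> k + \<nu> k * norm (transpose (S k) *v sh k) ^ (p + 1))"

definition N1 :: "(real^'n \<Rightarrow> real) \<Rightarrow> (nat \<Rightarrow> real^'n) \<Rightarrow> real \<Rightarrow> enat" where
  "N1 f x \<epsilon> = (if \<exists>k. norm (grad f (x k)) \<le> \<epsilon>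
                 then enat (LEAST k. norm (grad f (x k)) \<le> \<epsilon>) else \<infinity>)"

definition k1 :: "(nat \<Rightarrow> real) \<Rightarrow> real \<Rightarrow> real \<Rightarrow> enat" where
  "k1 \<nu> L vth = (if \<exists>k\<ge>1. \<nu> k \<ge> 2 * L / vth
                   then enat (LEAST k. k \<ge> 1 \<and> \<nu> k \<ge> 2 * L / vth) else \<infinity>)"

definition omega_true :: "(real^'n \<Rightarrow> real) \<Rightarrow> nat \<Rightarrow> (nat \<Rightarrow> real^'n) \<Rightarrow> (nat \<Rightarrow> real^'n^'l)
    \<Rightarrow> (nat \<Rightarrow> real^'l) \<Rightarrow> real \<Rightarrow> real \<Rightarrow> nat \<Rightarrow> bool" where
  "omega_true f p x S sh \<epsilon> \<omega> k \<longleftrightarrow>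
     enat k + 2 \<le> N1 f x \<epsilon> \<and> norm (transpose (S k) *v sh k) ^ p \<ge> \<omega> * \<epsilon>"

end

theory Submission
  imports Defs
begin

theorem mainTheorem7:
  fixes f :: "real^'n \<Rightarrow> real"
    and x :: "nat \<Rightarrow> real^'n" and S :: "nat \<Rightarrow> real^'n^'l" and sh :: "nat \<Rightarrow> real^'l"
    and \<sigma> \<nu> \<mu> \<kappa> :: "nat \<Rightarrow> real"
    and p k0 :: nat and x0 :: "real^'n"
    and \<nu>0 \<epsilon> \<theta> \<mu>m1 vth L \<omega> :: real
  assumes "CARD('l) < CARD('n)"
    and "1 \<le> p"
    and "AS1 f p" and "AS3 f p L"
    and "skoffar_run f p x0 \<nu>0 \<epsilon> \<theta> \<mu>m1 vth x S sh \<sigma> \<nu> \<mu> \<kappa>"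
    and "0 < \<omega>" and "\<omega> < 1"
    and "enat k0 < N1 f x \<epsilon>"
    and "1 \<le> k0"
    and "nat \<lceil>2 * L * \<epsilon> powr (- (real p + 1) / real p)
               / (vth * \<nu>0 * \<omega> powr ((real p + 1) / real p))\<rceil>
           \<le> card {k. k < k0 \<and> omega_true f p x S sh \<epsilon> \<omega> k}"
  shows "k1 \<nu> L vth \<noteq> \<infinity> \<and> k1 \<nu> L vth \<le> enat k0
         \<and> (\<forall>k. k1 \<nu> L vth \<le> enat k \<longrightarrow> \<sigma> k \<ge> 2 * L)"
proof -
  note run = assms(5)[unfolded skoffar_run_def]
  have nu0: "0 < \<nu>0" and eps: "0 < \<epsilon>" and vth: "0 < vth" using run by auto
  have nuz: "\<nu> 0 = \<nu>0" using run by auto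
  have nus: "\<And>k. \<nu> (Suc k) = \<nu> k + \<nu> k * norm (transpose (S k) *v sh k) ^ (p + 1)"
    using run by blast
  have sig: "\<And>k. k \<ge> 1 \<Longrightarrow> vth * \<nu> k \<le> \<sigma> k" using run by blast
  define a where "a i = norm (transpose (S i) *v sh i) ^ (p + 1)" for i
  have nusa: "\<And>k. \<nu> (Suc k) = \<nu> k + \<nu> k * a k" unfolding a_def by (rule nus)
  have a0: "a i \<ge> 0" for i unfolding a_def by simp
  have nulow: "\<nu> k \<ge> \<nu>0 + \<nu>0 * (\<Sum>i<k. a i)" for k
  proof (induction k)
    case 0 then show ?case using nuz by simp
  next
    case (Suc k)
    have s: "(\<Sum>i<k. a i) \<ge> 0" by (simp add: a0 sum_nonneg)
    have "\<nu> k \<ge> \<nu>0" using Suc s nu0 by (smt (verit) mult_nonneg_nonneg)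
    hence "\<nu> k * a k \<ge> \<nu>0 * a k" using a0 by (simp add: mult_right_mono)
    then show ?case using Suc nusa[of k] by (simp add: distrib_left)
  qed
  have numono: "\<nu> k \<le> \<nu> (k + d)" for k d
  proof (induction d)
    case 0 then show ?case by simp
  next
    case (Suc d)
    have "\<nu> (k + d) \<ge> \<nu>0" using nulow[of "k+d"] nu0 a0
      by (smt (verit) mult_nonneg_nonneg sum_nonneg)
    hence "\<nu> (k+d) * a (k+d) \<ge> 0" using nu0 a0 by simp
    then show ?case using Suc nusa[of "k+d"] by simp
  qed
  define q where "q = (real p + 1) / real p"
  have pp: "real p > 0" using assms(2) by simp
  have q0: "q \<ge> 0" unfolding q_def using pp by simp
  define c where "c = (\<omega> * \<epsilon>) powr q"
  define T where "T = {k. k < k0 \<and> omega_true f p x S sh \<epsilon> \<omega> k}"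
  have aT: "a i \<ge> c" if "i \<in> T" for i
  proof -
    define n where "n = norm (transpose (S i) *v sh i)"
    have h: "n ^ p \<ge> \<omega> * \<epsilon>" using that unfolding T_def omega_true_def n_def by auto
    have we: "\<omega> * \<epsilon> > 0" using assms(6) eps by simp
    have n0: "n > 0"
    proof (rule ccontr)
      assume "\<not> n > 0" hence "n = 0" unfolding n_def by simp
      thus False using h we assms(2) by (simp add: zero_power)
    qed
    have "a i = n powr (real p + 1)" unfolding a_def n_def[symmetric]
      using n0 by (metis of_nat_Suc powr_realpow Suc_eq_plus1 add.commute)
    also have "\<dots> = (n powr real p) powr q" unfolding q_def using pp
      by (simp add: powr_powr)
    also have "\<dots> = (n ^ p) powr q" using n0 by (simp add: powr_realpow)
    also have "\<dots> \<ge> c" unfolding c_def using powr_mono2[OF q0 _ h] we by simp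
    finally show ?thesis .
  qed
  have finT: "finite T" unfolding T_def by simp
  have "real (card T) * c \<le> (\<Sum>i\<in>T. a i)" using sum_bounded_below[of T c a] aT by simp
  also have "\<dots> \<le> (\<Sum>i<k0. a i)" using a0 by (intro sum_mono2) (auto simp: T_def)
  finally have sumT: "real (card T) * c \<le> (\<Sum>i<k0. a i)" .
  define y where "y = 2 * L * \<epsilon> powr (- (real p + 1) / real p)
               / (vth * \<nu>0 * \<omega> powr ((real p + 1) / real p))"
  have yle: "y \<le> real (card T)"
  proof -
    have "y \<le> real (nat \<lceil>y\<rceil>)" by linarith
    also have "\<dots> \<le> real (card T)" using assms(10) unfolding y_def T_def by simp
    finally show ?thesis .
  qed
  have c_eq: "c = \<omega> powr q * \<epsilon> powr q" unfolding c_def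
    using assms(6) eps by (simp add: powr_mult)
  have y_eq: "y = 2 * L / (\<epsilon> powr q * (vth * \<nu>0 * \<omega> powr q))"
  proof -
    have "- (real p + 1) / real p = - q" unfolding q_def by (simp add: minus_divide_left)
    hence e: "\<epsilon> powr (- (real p + 1) / real p) = inverse (\<epsilon> powr q)"
      by (simp only: powr_minus)
    show ?thesis unfolding y_def q_def[symmetric] e
      by (simp add: divide_inverse)
  qed
  have key: "\<nu>0 * y * c = 2 * L / vth"
    unfolding y_eq c_eq using eps vth nu0 assms(6) by (simp add: field_simps)
  have cpos: "c \<ge> 0" unfolding c_def by simp
  have "2 * L / vth = \<nu>0 * y * c" using key by simp
  also have "\<dots> \<le> \<nu>0 * (real (card T) * c)" using yle cpos nu0
    by (simp add: mult_right_mono)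
  also have "\<dots> \<le> \<nu>0 * (\<Sum>i<k0. a i)" using sumT nu0 by simp
  also have "\<dots> \<le> \<nu> k0" using nulow[of k0] nu0 by simp
  finally have nuk0: "\<nu> k0 \<ge> 2 * L / vth" .
  have ex: "\<exists>k\<ge>1. \<nu> k \<ge> 2 * L / vth" using nuk0 assms(9) by blast
  define m where "m = (LEAST k. k \<ge> 1 \<and> \<nu> k \<ge> 2 * L / vth)"
  have k1eq: "k1 \<nu> L vth = enat m" unfolding k1_def m_def using ex by simp
  have mprop: "m \<ge> 1 \<and> \<nu> m \<ge> 2 * L / vth" unfolding m_def
    by (rule LeastI[of _ k0]) (use nuk0 assms(9) in simp)
  have mle: "m \<le> k0" unfolding m_def by (rule Least_le) (use nuk0 assms(9) in simp)
  have "\<sigma> k \<ge> 2 * L" if "m \<le> k" for k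
  proof -
    have "\<nu> m \<le> \<nu> k" using numono[of m "k - m"] that by simp
    hence "2 * L / vth \<le> \<nu> k" using mprop by simp
    hence "2 * L \<le> vth * \<nu> k" using vth by (simp add: divide_simps mult.commute)
    thus ?thesis using sig[of k] that mprop by simp
  qed
  thus ?thesis using k1eq mle by simp
qed

end
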